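(* For $\theta=(\theta_1,\ldots,\theta_n)$ and $1\le i<n$ one has \[ G_{\ldots,\theta_i,\theta_{i+1},\ldots}(x|t) = -\beta\, G_{\ldots,\theta_i+1,\theta_{i+1},\ldots}(x|t) - \frac{1+\beta t_{n+\theta_i-i+1}}{1+\beta t_{n+\theta_{i+1}-i}}\Big(G_{\ldots,\theta_{i+1}-1,\theta_i+1,\ldots}(x|t)+\beta\, G_{\ldots,\theta_{i+1},\theta_i+1,\ldots}(x|t)\Big), \] where only the $i$-th and $(i+1)$-th entries of the index are changed.
   Context: Let $\beta$ be a parameter, $x=(x_1,\ldots,x_n)$ variables and $t=(t_1,t_2,\ldots)$ equivariant parameters. Write $x\oplus y=x+y+\beta xy$ and define the $\beta$-deformed factorial power $(x|t)^r=\prod_{i=1}^r (x\oplus t_i)$. For a sequence $\theta=(\theta_1,\ldots,\theta_n)$ (a partition or, more generally, a sequence of integers for which the powers below make sense), the factorial Grothendieck polynomial is given by the determinant formula (Ikeda–Naruse) \[ G_\theta(x|t)=\frac{\det\big[(x_j|t)^{\theta_i+n-i}(1+\beta x_j)^{i-1}\big]_{1\le i,j\le n}}{\det\big[x_j^{n-i}\big]_{1\le i,j\le n}}, \] the denominator being the Vandermonde determinant $\prod_{i<j}(x_i-x_j)$; this determinant formula is used to define $G_\theta$ for non-partition indices $\theta$ appearing in the statement. *)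

theory Defs
  imports "Jordan_Normal_Form.Determinant"
begin

definition boplus :: "'a::field \<Rightarrow> 'a \<Rightarrow> 'a \<Rightarrow> 'a" where
  "boplus \<beta> a b = a + b + \<beta> * a * b"

definition fpow :: "'a::field \<Rightarrow> (nat \<Rightarrow> 'a) \<Rightarrow> nat \<Rightarrow> 'a \<Rightarrow> 'a" where
  "fpow \<beta> t r y = (\<Prod>k=1..r. boplus \<beta> y (t k))"

text \<open>Factorial Grothendieck polynomial via the Ikeda--Naruse determinant formula.
  Matrix rows/columns are 0-based in the library: row i, column j correspond to i+1, j+1.\<close>
definition grothG :: "'a::field \<Rightarrow> (nat \<Rightarrow> 'a) \<Rightarrow> nat \<Rightarrow> (nat \<Rightarrow> 'a) \<Rightarrow> (nat \<Rightarrow> int) \<Rightarrow> 'a" where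
  "grothG \<beta> t n x \<theta> =
     det (mat n n (\<lambda>(i, j). fpow \<beta> t (nat (\<theta> (i + 1) + int n - int (i + 1))) (x (j + 1))
                              * (1 + \<beta> * x (j + 1)) ^ i))
     / det (mat n n (\<lambda>(i, j). x (j + 1) ^ (n - (i + 1))))"

end

theory Submission
  imports Defs
begin

definition Dm :: "nat \<Rightarrow> (nat \<Rightarrow> 'a::field) \<Rightarrow> (nat \<Rightarrow> 'a \<Rightarrow> 'a) \<Rightarrow> 'a" where
  "Dm n x F = det (mat n n (\<lambda>(r, j). F r (x (j + 1))))"

lemma Dm_expand:
  "Dm n x F = (\<Sum>p\<in>{p. p permutes {0..<n}}. signof p * (\<Prod>r = 0..<n. F r (x (p r + 1))))"
  unfolding Dm_def
  apply (subst det_def'[of _ n], simp)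
  apply (rule sum.cong, simp)
  apply (rule arg_cong[where f="\<lambda>z. _ * z"])
  apply (rule prod.cong, simp)
  subgoal for p r using permutes_in_image[of p "{0..<n}" r] by simp
  done

lemma Dm_lin:
  assumes k: "k < n"
  shows "Dm n x (F(k := (\<lambda>y. a * G y + b * H y))) = a * Dm n x (F(k := G)) + b * Dm n x (F(k := H))"
proof -
  have pr: "(\<Prod>r = 0..<n. (F(k := K)) r (x (p r + 1))) = K (x (p k + 1)) * (\<Prod>r \<in> {0..<n} - {k}. F r (x (p r + 1)))"
    for p K
  proof -
    have "(\<Prod>r = 0..<n. (F(k := K)) r (x (p r + 1))) = (F(k := K)) k (x (p k + 1)) * (\<Prod>r \<in> {0..<n} - {k}. (F(k := K)) r (x (p r + 1)))"
      using k by (subst prod.remove[of _ k]) auto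
    also have "(\<Prod>r \<in> {0..<n} - {k}. (F(k := K)) r (x (p r + 1))) = (\<Prod>r \<in> {0..<n} - {k}. F r (x (p r + 1)))"
      by (rule prod.cong) auto
    finally show ?thesis by simp
  qed
  show ?thesis
    unfolding Dm_expand pr
    by (simp add: sum_distrib_left sum.distrib[symmetric] algebra_simps)
qed

lemma Dm_swap:
  assumes "k < n" "l < n" "k \<noteq> l"
  shows "Dm n x (F(k := G, l := H)) = - Dm n x (F(k := H, l := G))"
proof -
  let ?M = "\<lambda>F. mat n n (\<lambda>(r, j). F r (x (j + 1)))"
  have "swaprows k l (?M (F(k := H, l := G))) = ?M (F(k := G, l := H))"
    by (rule eq_matI) (use assms in auto)
  moreover have "det (swaprows k l (?M (F(k := H, l := G)))) = - det (?M (F(k := H, l := G)))"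
    by (rule det_swaprows) (use assms in auto)
  ultimately show ?thesis unfolding Dm_def by simp
qed


definition Rw :: "'a::field \<Rightarrow> (nat \<Rightarrow> 'a) \<Rightarrow> nat \<Rightarrow> (nat \<Rightarrow> int) \<Rightarrow> nat \<Rightarrow> 'a \<Rightarrow> 'a" where
  "Rw \<beta> t n \<theta> r y = fpow \<beta> t (nat (\<theta> (r + 1) + int n - int (r + 1))) y * (1 + \<beta> * y) ^ r"

lemma G_eq: "grothG \<beta> t n x \<theta> = Dm n x (Rw \<beta> t n \<theta>) / det (mat n n (\<lambda>(i, j). x (j + 1) ^ (n - (i + 1))))"
  unfolding grothG_def Dm_def Rw_def by simp

lemma fpow_Suc: "fpow \<beta> t (Suc a) y = fpow \<beta> t a y * boplus \<beta> y (t (Suc a))"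
  unfolding fpow_def by (simp add: prod.nat_ivl_Suc')

lemma key: "fpow \<beta> t a y * (1 + \<beta> * y) ^ k + \<beta> * (fpow \<beta> t (Suc a) y * (1 + \<beta> * y) ^ k)
   = (1 + \<beta> * t (Suc a)) * (fpow \<beta> t a y * (1 + \<beta> * y) ^ Suc k)"
  unfolding fpow_Suc boplus_def by (simp add: algebra_simps)

lemma final_alg:
  fixes N0 N1 N2 N3 E V ca cb \<beta> :: "'a::field"
  assumes "N0 + \<beta> * N1 = ca * E" "N2 + \<beta> * N3 = - cb * E" "cb \<noteq> 0"
  shows "N0 / V = - \<beta> * (N1 / V) - ca / cb * (N2 / V + \<beta> * (N3 / V))"
proof -
  have "N2 / V + \<beta> * (N3 / V) = (N2 + \<beta> * N3) / V" by (simp add: add_divide_distrib)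
  also have "\<dots> = - cb * E / V" using assms(2) by simp
  finally have h: "ca / cb * (N2 / V + \<beta> * (N3 / V)) = - ca * E / V" using assms(3) by simp
  have "N0 = ca * E - \<beta> * N1" using assms(1) by (simp add: algebra_simps)
  thus ?thesis unfolding h by (simp add: diff_divide_distrib)
qed

theorem mainTheorem6:
  fixes \<beta> :: "'a::field" and t x :: "nat \<Rightarrow> 'a" and \<theta> :: "nat \<Rightarrow> int" and n i :: nat
  assumes "1 \<le> i" and "i < n"
    and "\<forall>k \<in> {1..n}. \<theta> k + int n - int k \<ge> 0"
    and "1 + \<beta> * t (nat (int n + \<theta> (i + 1) - int i)) \<noteq> 0"
  shows "grothG \<beta> t n x \<theta> =
     - \<beta> * grothG \<beta> t n x (\<theta>(i := \<theta> i + 1))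
     - (1 + \<beta> * t (nat (int n + \<theta> i - int i + 1))) / (1 + \<beta> * t (nat (int n + \<theta> (i + 1) - int i)))
       * (grothG \<beta> t n x (\<theta>(i := \<theta> (i + 1) - 1, i + 1 := \<theta> i + 1))
          + \<beta> * grothG \<beta> t n x (\<theta>(i := \<theta> (i + 1), i + 1 := \<theta> i + 1)))"
proof -
  define k where "k = i - 1"
  have ik: "i = Suc k" using assms(1) k_def by simp
  have kn: "k < n" "Suc k < n" using assms(2) ik by auto
  define a where "a = nat (\<theta> i + int n - int i)"
  define b where "b = nat (\<theta> (i + 1) + int n - int (i + 1))"
  have a0: "\<theta> i + int n - int i \<ge> 0" using assms(1,2,3) by auto
  have b0: "\<theta> (i+1) + int n - int (i+1) \<ge> 0" using assms(3)[rule_format, of "i+1"] assms(2) by auto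
  have ta: "nat (int n + \<theta> i - int i + 1) = Suc a" using a0 a_def by (simp add: nat_add_distrib[symmetric] algebra_simps)
  have tb: "nat (int n + \<theta> (i + 1) - int i) = Suc b" using b0 b_def by (simp add: algebra_simps) 
  define w where "w = (\<lambda>y::'a. 1 + \<beta> * y)"
  define f where "f = (\<lambda>r y. fpow \<beta> t r y)"
  define R where "R = Rw \<beta> t n \<theta>"
  define V where "V = det (mat n n (\<lambda>(i, j). x (j + 1) ^ (n - (i + 1))))"
  define E where "E = Dm n x (R(k := (\<lambda>y. f a y * w y ^ Suc k), Suc k := (\<lambda>y. f b y * w y ^ Suc k)))"
  define ca where "ca = 1 + \<beta> * t (Suc a)"
  define cb where "cb = 1 + \<beta> * t (Suc b)"
  have cb0: "cb \<noteq> 0" using assms(4) tb cb_def by simp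
  have R0: "Rw \<beta> t n \<theta> = R(k := (\<lambda>y. f a y * w y ^ k), Suc k := (\<lambda>y. f b y * w y ^ Suc k))"
    by (rule ext)+ (simp add: R_def Rw_def f_def w_def a_def b_def ik)
  have R1: "Rw \<beta> t n (\<theta>(i := \<theta> i + 1)) = R(k := (\<lambda>y. f (Suc a) y * w y ^ k), Suc k := (\<lambda>y. f b y * w y ^ Suc k))"
    apply (rule ext)+ using a0 by (auto simp add: R_def Rw_def f_def w_def a_def b_def ik Suc_nat_eq_nat_zadd1 algebra_simps)
  have R2: "Rw \<beta> t n (\<theta>(i := \<theta> (i + 1) - 1, i + 1 := \<theta> i + 1)) = R(k := (\<lambda>y. f b y * w y ^ k), Suc k := (\<lambda>y. f a y * w y ^ Suc k))"
    apply (rule ext)+ by (auto simp add: R_def Rw_def f_def w_def a_def b_def ik algebra_simps)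
  have R3: "Rw \<beta> t n (\<theta>(i := \<theta> (i + 1), i + 1 := \<theta> i + 1)) = R(k := (\<lambda>y. f (Suc b) y * w y ^ k), Suc k := (\<lambda>y. f a y * w y ^ Suc k))"
    apply (rule ext)+ using b0 by (auto simp add: R_def Rw_def f_def w_def a_def b_def ik Suc_nat_eq_nat_zadd1 algebra_simps)
  have e1: "Dm n x (Rw \<beta> t n \<theta>) + \<beta> * Dm n x (Rw \<beta> t n (\<theta>(i := \<theta> i + 1))) = ca * E"
  proof -
    have "Dm n x (Rw \<beta> t n \<theta>) + \<beta> * Dm n x (Rw \<beta> t n (\<theta>(i := \<theta> i + 1)))
      = Dm n x ((R(Suc k := (\<lambda>y. f b y * w y ^ Suc k)))(k := (\<lambda>y. 1 * (f a y * w y ^ k) + \<beta> * (f (Suc a) y * w y ^ k))))"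
      unfolding R0 R1 using kn by (subst Dm_lin) (simp_all add: fun_upd_twist)
    also have "\<dots> = Dm n x ((R(Suc k := (\<lambda>y. f b y * w y ^ Suc k)))(k := (\<lambda>y. ca * (f a y * w y ^ Suc k) + 0 * (f a y * w y ^ Suc k))))"
      unfolding ca_def f_def w_def mult_1 key by simp
    also have "\<dots> = ca * E"
      unfolding E_def using kn by (subst Dm_lin) (simp_all add: fun_upd_twist)
    finally show ?thesis .
  qed
  have e2: "Dm n x (Rw \<beta> t n (\<theta>(i := \<theta> (i + 1) - 1, i + 1 := \<theta> i + 1))) + \<beta> * Dm n x (Rw \<beta> t n (\<theta>(i := \<theta> (i + 1), i + 1 := \<theta> i + 1))) = - cb * E"
  proof -
    have "Dm n x (Rw \<beta> t n (\<theta>(i := \<theta> (i + 1) - 1, i + 1 := \<theta> i + 1))) + \<beta> * Dm n x (Rw \<beta> t n (\<theta>(i := \<theta> (i + 1), i + 1 := \<theta> i + 1)))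
      = Dm n x ((R(Suc k := (\<lambda>y. f a y * w y ^ Suc k)))(k := (\<lambda>y. 1 * (f b y * w y ^ k) + \<beta> * (f (Suc b) y * w y ^ k))))"
      unfolding R2 R3 using kn by (subst Dm_lin) (simp_all add: fun_upd_twist)
    also have "\<dots> = Dm n x ((R(Suc k := (\<lambda>y. f a y * w y ^ Suc k)))(k := (\<lambda>y. cb * (f b y * w y ^ Suc k) + 0 * (f b y * w y ^ Suc k))))"
      unfolding cb_def f_def w_def mult_1 key by simp
    also have "\<dots> = cb * Dm n x (R(k := (\<lambda>y. f b y * w y ^ Suc k), Suc k := (\<lambda>y. f a y * w y ^ Suc k)))"
      using kn by (subst Dm_lin) (simp_all add: fun_upd_twist)
    also have "\<dots> = - cb * E"
      unfolding E_def using kn by (subst Dm_swap) auto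
    finally show ?thesis .
  qed
  show ?thesis
    unfolding G_eq ta tb
    using e1 e2 cb0 unfolding ca_def[symmetric] cb_def[symmetric] V_def[symmetric]
    by (rule final_alg)
qed

end
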